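(* Let $D\ge 2$, $\eta=\mathrm{diag}(-1,1,\dots,1)$, and let $g_{\mu\nu}$, $f_{\mu\nu}$ be real symmetric invertible $D\times D$ matrices of Lorentzian signature $(-,+,\dots,+)$, with inverses $g^{\mu\nu}$, $f^{\mu\nu}$. If the matrix $g^{-1}f$ has no (real) negative eigenvalues, then there exist real matrices $e_A{}^\mu$ and $L^B{}_\nu$ with $\eta^{AB}e_A{}^\mu e_B{}^\nu=g^{\mu\nu}$ and $\eta_{AB}L^A{}_\mu L^B{}_\nu=f_{\mu\nu}$ such that $e_A{}^\mu L_{B\mu}=e_B{}^\mu L_{A\mu}$ for all $A,B$.
   Context: Greek indices are space-time indices and capital Latin indices are Lorentz indices, lowered and raised with $\eta_{AB}$ and $\eta^{AB}$ (so $L_{B\mu}=\eta_{BC}L^C{}_\mu$); repeated indices are summed. *)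

theory Defs
  imports "HOL-Analysis.Analysis"
begin

definition minkowski :: "'n::finite \<Rightarrow> real^'n^'n" where
  "minkowski t0 = (\<chi> A B. if A = B then (if A = t0 then -1 else 1) else 0)"

text \<open>Real symmetric invertible matrix of Lorentzian signature (-,+,...,+):
 by Sylvester's law of inertia, congruent to the Minkowski metric.\<close>
definition lorentzian :: "'n::finite \<Rightarrow> real^'n^'n \<Rightarrow> bool" where
  "lorentzian t0 g \<longleftrightarrow> transpose g = g \<and> invertible g \<and>
     (\<exists>P::real^'n^'n. invertible P \<and> transpose P ** g ** P = minkowski t0)"

definition real_eigenvalue :: "real^'n^'n \<Rightarrow> real \<Rightarrow> bool" where
  "real_eigenvalue M l \<longleftrightarrow> (\<exists>v. v \<noteq> 0 \<and> M *v v = l *\<^sub>R v)"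

end

theory Submission
  imports Defs "HOL-Computational_Algebra.Fundamental_Theorem_Algebra" "HOL-Computational_Algebra.Formal_Power_Series"
begin


lemma minv: fixes A :: "real^'n^'n" assumes "invertible A"
  shows "A ** matrix_inv A = mat 1" "matrix_inv A ** A = mat 1"
  using someI_ex[OF assms[unfolded invertible_def]] unfolding matrix_inv_def by auto

lemma minv_unique: fixes A B :: "real^'n^'n" assumes "A ** B = mat 1"
  shows "matrix_inv A = B"
proof -
  have "invertible A" using assms invertible_right_inverse by blast
  then have "matrix_inv A = matrix_inv A ** (A ** B)" using assms by simp
  also have "\<dots> = B" using minv(2)[OF \<open>invertible A\<close>] by (simp add: matrix_mul_assoc)
  finally show ?thesis .
qed

lemma minv_invertible: fixes A :: "real^'n^'n" assumes "invertible A"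
  shows "invertible (matrix_inv A)"
  using minv[OF assms] invertible_def by blast

lemma transpose_minv: fixes A :: "real^'n^'n" assumes "invertible A"
  shows "transpose (matrix_inv A) = matrix_inv (transpose A)"
proof -
  have "transpose A ** transpose (matrix_inv A) = mat 1"
    using minv(2)[OF assms] by (metis matrix_transpose_mul transpose_mat)
  then show ?thesis using minv_unique by metis
qed

lemma mm_add_right: "((A::real^'n^'n) + B) ** C = A ** C + B ** C"
  by (vector matrix_matrix_mult_def sum.distrib field_simps)
lemma mm_diff_right: "((A::real^'n^'n) - B) ** C = A ** C - B ** C"
  by (vector matrix_matrix_mult_def sum_subtractf field_simps)
lemma mm_diff_left: "(A::real^'n^'n) ** (B - C) = A ** B - A ** C"
  by (vector matrix_matrix_mult_def sum_subtractf field_simps)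
lemma mm_scale_left: "(c *\<^sub>R (A::real^'n^'n)) ** B = c *\<^sub>R (A ** B)"
  by (vector matrix_matrix_mult_def sum_distrib_left field_simps)
lemma mm_scale_right: "(A::real^'n^'n) ** (c *\<^sub>R B) = c *\<^sub>R (A ** B)"
  by (vector matrix_matrix_mult_def sum_distrib_left field_simps)
lemma transpose_add: "transpose ((A::real^'n^'n) + B) = transpose A + transpose B"
  by (vector transpose_def)
lemma transpose_scale: "transpose (c *\<^sub>R (A::real^'n^'n)) = c *\<^sub>R transpose A"
  by (vector transpose_def)
lemma transpose_zero: "transpose (0::real^'n^'n) = 0"
  by (vector transpose_def)

lemma mm_sum_left: fixes X :: "_ \<Rightarrow> real^'n^'n" shows "(A::real^'n^'n) ** (\<Sum>i\<in>S. X i) = (\<Sum>i\<in>S. A ** X i)"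
  by (induction S rule: infinite_finite_induct) (auto simp: matrix_add_ldistrib)
lemma mm_sum_right: fixes X :: "_ \<Rightarrow> real^'n^'n" shows "(\<Sum>i\<in>S. X i) ** (A::real^'n^'n) = (\<Sum>i\<in>S. X i ** A)"
  by (induction S rule: infinite_finite_induct) (auto simp: mm_add_right)

section \<open>Powers and polynomial evaluation\<close>

primrec mpow :: "real^'n^'n \<Rightarrow> nat \<Rightarrow> real^'n^'n" where
  "mpow A 0 = mat 1" | "mpow A (Suc k) = A ** mpow A k"

definition mpev :: "real poly \<Rightarrow> real^'n^'n \<Rightarrow> real^'n^'n" where
  "mpev p A = (\<Sum>i\<le>degree p. coeff p i *\<^sub>R mpow A i)"

lemma mpow_add: "mpow A (a + b) = mpow A a ** mpow A b"
  by (induction a) (auto simp: matrix_mul_assoc)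

lemma mpow_comm: "X ** A = A ** X \<Longrightarrow> X ** mpow A k = mpow A k ** X"
  by (induction k) (auto simp: matrix_mul_assoc, metis matrix_mul_assoc)

lemma mpow_mult_comm: "X ** Y = Y ** X \<Longrightarrow> mpow (X ** Y) k = mpow X k ** mpow Y k"
proof (induction k)
  case (Suc k)
  have c: "Y ** mpow X k = mpow X k ** Y" using mpow_comm[of Y X k] Suc.prems by simp
  have "mpow (X ** Y) (Suc k) = X ** Y ** (mpow X k ** mpow Y k)" using Suc by simp
  also have "\<dots> = X ** (Y ** mpow X k) ** mpow Y k" by (simp add: matrix_mul_assoc)
  also have "\<dots> = X ** mpow X k ** (Y ** mpow Y k)" by (simp add: c matrix_mul_assoc)
  finally show ?case by (simp add: matrix_mul_assoc)
qed simp

lemma mpev_bound: "degree p \<le> N \<Longrightarrow> mpev p A = (\<Sum>i\<le>N. coeff p i *\<^sub>R mpow A i)"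
  unfolding mpev_def by (rule sum.mono_neutral_left) (auto simp: coeff_eq_0)

lemma mpev_0[simp]: "mpev 0 A = 0" by (simp add: mpev_def)

lemma mpev_add: "mpev (p + q) A = mpev p A + mpev q A"
proof -
  let ?N = "max (degree p) (degree q)"
  have "mpev (p + q) A = (\<Sum>i\<le>?N. coeff (p+q) i *\<^sub>R mpow A i)"
    by (rule mpev_bound) (simp add: degree_add_le)
  also have "\<dots> = (\<Sum>i\<le>?N. coeff p i *\<^sub>R mpow A i) + (\<Sum>i\<le>?N. coeff q i *\<^sub>R mpow A i)"
    by (simp add: scaleR_add_left sum.distrib)
  also have "\<dots> = mpev p A + mpev q A"
    by (simp add: mpev_bound[of p ?N] mpev_bound[of q ?N])
  finally show ?thesis .
qed

lemma mpev_smult: "mpev (smult c p) A = c *\<^sub>R mpev p A"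
proof -
  have "mpev (smult c p) A = (\<Sum>i\<le>degree p. coeff (smult c p) i *\<^sub>R mpow A i)"
    by (rule mpev_bound) simp
  then show ?thesis by (simp add: mpev_def scaleR_sum_right)
qed

lemma mpev_minus: "mpev (- p) A = - mpev p A"
  using mpev_smult[of "-1" p A] by simp

lemma mpev_diff: "mpev (p - q) A = mpev p A - mpev q A"
  using mpev_add[of p "-q" A] mpev_minus[of q A] by simp

lemma mpev_pCons: "mpev (pCons a p) A = a *\<^sub>R mat 1 + A ** mpev p A"
proof -
  have "mpev (pCons a p) A = (\<Sum>i\<le>Suc (degree p). coeff (pCons a p) i *\<^sub>R mpow A i)"
    by (rule mpev_bound) (simp add: degree_pCons_le)
  also have "\<dots> = a *\<^sub>R mat 1 + (\<Sum>i\<le>degree p. coeff p i *\<^sub>R (A ** mpow A i))"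
    unfolding sum.atMost_Suc_shift by (simp add: coeff_pCons_0)
  also have "\<dots> = a *\<^sub>R mat 1 + A ** mpev p A"
    by (simp add: mpev_def mm_sum_left mm_scale_right)
  finally show ?thesis .
qed

lemma mpev_mult: "mpev (p * q) A = mpev p A ** mpev q A"
proof (induction p)
  case (pCons a p)
  have "mpev (pCons a p * q) A = a *\<^sub>R mpev q A + A ** (mpev p A ** mpev q A)"
    by (simp add: mpev_add mpev_smult mpev_pCons pCons.IH)
  also have "\<dots> = mpev (pCons a p) A ** mpev q A"
    by (simp add: mpev_pCons mm_add_right mm_scale_left matrix_mul_assoc)
  finally show ?case .
qed simp

lemma mpev_const: "mpev [:c:] A = c *\<^sub>R mat 1"
  by (simp add: mpev_def)

lemma mpev_1: "mpev 1 A = mat 1"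
  using mpev_const[of 1 A] by (simp add: one_pCons)

lemma mpev_x: "mpev [:0,1:] A = A"
  by (simp add: mpev_pCons mpev_const)

lemma mpev_power: "mpev (p ^ k) A = mpow (mpev p A) k"
  by (induction k) (auto simp: mpev_mult mpev_1)

lemma mpev_monom: "mpev (monom c i) A = c *\<^sub>R mpow A i"
proof -
  have "mpev (monom c i) A = (\<Sum>j\<le>i. coeff (monom c i) j *\<^sub>R mpow A j)"
    by (rule mpev_bound) (simp add: degree_monom_le)
  also have "\<dots> = c *\<^sub>R mpow A i"
    by (simp add: coeff_monom if_distrib if_distribR sum.delta cong: if_cong)
  finally show ?thesis .
qed

lemma mpev_sum: "mpev (\<Sum>i\<in>S. p i) A = (\<Sum>i\<in>S. mpev (p i) A)"
  by (induction S rule: infinite_finite_induct) (auto simp: mpev_add)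




section \<open>Good matrices: bicommutant of M and g-selfadjoint\<close>

definition good :: "real^'n^'n \<Rightarrow> real^'n^'n \<Rightarrow> real^'n^'n \<Rightarrow> bool" where
  "good g M X \<longleftrightarrow> (\<forall>Y. Y ** M = M ** Y \<longrightarrow> X ** Y = Y ** X) \<and> transpose X ** g = g ** X"

lemma good_commM: "good g M X \<Longrightarrow> X ** M = M ** X"
  unfolding good_def by auto

lemma good_comm: "good g M X \<Longrightarrow> good g M Y \<Longrightarrow> X ** Y = Y ** X"
  unfolding good_def by blast

lemma good_one: "good g M (mat 1)" unfolding good_def by simp
lemma good_zero: "good g M 0" unfolding good_def by (simp add: transpose_zero)

lemma good_add: "good g M X \<Longrightarrow> good g M Y \<Longrightarrow> good g M (X + Y)"
  unfolding good_def by (simp add: mm_add_right matrix_add_ldistrib transpose_add)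

lemma good_scale: "good g M X \<Longrightarrow> good g M (c *\<^sub>R X)"
  unfolding good_def by (simp add: mm_scale_left mm_scale_right transpose_scale)

lemma good_diff: "good g M X \<Longrightarrow> good g M Y \<Longrightarrow> good g M (X - Y)"
  using good_add[of g M X "(-1) *\<^sub>R Y"] good_scale[of g M Y "-1"] by simp

lemma good_mult: assumes "good g M X" "good g M Y" shows "good g M (X ** Y)"
proof -
  have XY: "X ** Y = Y ** X" using good_comm assms by blast
  have "\<forall>Z. Z ** M = M ** Z \<longrightarrow> X ** Y ** Z = Z ** (X ** Y)"
  proof (intro allI impI)
    fix Z assume "Z ** M = M ** Z"
    then have "X ** Z = Z ** X" "Y ** Z = Z ** Y" using assms unfolding good_def by blast+
    then show "X ** Y ** Z = Z ** (X ** Y)" by (metis matrix_mul_assoc)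
  qed
  moreover have "transpose (X ** Y) ** g = g ** (X ** Y)"
  proof -
    have "transpose (X ** Y) ** g = transpose Y ** (transpose X ** g)"
      by (simp add: matrix_transpose_mul matrix_mul_assoc)
    also have "\<dots> = g ** (Y ** X)"
    proof -
      have "transpose X ** g = g ** X" "transpose Y ** g = g ** Y" using assms unfolding good_def by blast+
      then show ?thesis by (metis matrix_mul_assoc)
    qed
    finally show ?thesis using XY by simp
  qed
  ultimately show ?thesis unfolding good_def by blast
qed

lemma good_inv: assumes "good g M X" "invertible X" shows "good g M (matrix_inv X)"
proof -
  note iv = minv[OF assms(2)]
  let ?V = "matrix_inv X"
  have "?V ** Y = Y ** ?V" if "Y ** M = M ** Y" for Y
  proof -
    have XY: "X ** Y = Y ** X" using assms that unfolding good_def by blast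
    have "?V ** Y = ?V ** Y ** (X ** ?V)" using iv by simp
    also have "\<dots> = ?V ** (X ** Y) ** ?V" by (simp add: XY matrix_mul_assoc)
    also have "\<dots> = Y ** ?V" using iv by (simp add: matrix_mul_assoc)
    finally show ?thesis .
  qed
  moreover have "transpose ?V ** g = g ** ?V"
  proof -
    have tX: "transpose ?V ** transpose X = mat 1"
      using iv by (metis matrix_transpose_mul transpose_mat)
    have "g ** ?V = transpose ?V ** transpose X ** g ** ?V" using tX by simp
    also have "\<dots> = transpose ?V ** g ** X ** ?V"
    proof -
      have "transpose X ** g = g ** X" using assms unfolding good_def by blast
      then show ?thesis by (metis matrix_mul_assoc)
    qed
    also have "\<dots> = transpose ?V ** g" using iv by (simp flip: matrix_mul_assoc)
    finally show ?thesis by simp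
  qed
  ultimately show ?thesis unfolding good_def by blast
qed

lemma good_mpow: "good g M X \<Longrightarrow> good g M (mpow X k)"
  by (induction k) (auto simp: good_one good_mult)

lemma good_mpev: "good g M X \<Longrightarrow> good g M (mpev p X)"
  by (induction p) (auto simp: mpev_pCons good_add good_scale good_one good_mult good_zero)

lemma good_sum: "(\<And>i. i \<in> S \<Longrightarrow> good g M (X i)) \<Longrightarrow> good g M (\<Sum>i\<in>S. X i)"
  by (induction S rule: infinite_finite_induct) (auto simp: good_zero good_add)

section \<open>Annihilating polynomials\<close>

lemma span_pow: "x \<in> span (mpow M ` {..<j}) \<Longrightarrow> \<exists>c. x = (\<Sum>i<j. c i *\<^sub>R mpow M i)"
proof (induction j arbitrary: x)
  case 0
  then show ?case by simp
next
  case (Suc j)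
  have "mpow M ` {..<Suc j} = insert (mpow M j) (mpow M ` {..<j})"
    by (simp add: lessThan_Suc)
  with Suc.prems obtain k where "x - k *\<^sub>R mpow M j \<in> span (mpow M ` {..<j})"
    by (auto simp: span_insert)
  then obtain c where c: "x - k *\<^sub>R mpow M j = (\<Sum>i<j. c i *\<^sub>R mpow M i)" using Suc.IH by blast
  have "(\<Sum>i<j. (c(j := k)) i *\<^sub>R mpow M i) = (\<Sum>i<j. c i *\<^sub>R mpow M i)"
    by (rule sum.cong) auto
  then have "x = (\<Sum>i<Suc j. (c(j := k)) i *\<^sub>R mpow M i)" using c by (simp add: algebra_simps)
  then show ?case by blast
qed

lemma exists_pow_in_span: "\<exists>j. mpow (M::real^'n^'n) j \<in> span (mpow M ` {..<j})"
proof (rule ccontr)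
  assume "\<not> ?thesis"
  then have ns: "\<And>j. mpow M j \<notin> span (mpow M ` {..<j})" by blast
  have "dim (mpow M ` {..<j}) = j" for j
  proof (induction j)
    case (Suc j)
    have "mpow M ` {..<Suc j} = insert (mpow M j) (mpow M ` {..<j})"
      by (simp add: lessThan_Suc)
    then show ?case using Suc ns[of j] by (simp add: dim_insert)
  qed simp
  moreover have "dim (mpow M ` {..<Suc DIM(real^'n^'n)}) \<le> DIM(real^'n^'n)"
    by (rule dim_subset_UNIV)
  ultimately show False by simp
qed

lemma annihilator: "\<exists>q. q \<noteq> 0 \<and> mpev q (M::real^'n^'n) = 0"
proof -
  obtain j where "mpow M j \<in> span (mpow M ` {..<j})" using exists_pow_in_span by blast
  then obtain c where c: "mpow M j = (\<Sum>i<j. c i *\<^sub>R mpow M i)" using span_pow by blast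
  define q where "q = monom 1 j - (\<Sum>i<j. monom (c i) i)"
  have "coeff q j = 1" unfolding q_def by (simp add: coeff_sum coeff_monom)
  then have "q \<noteq> 0" by auto
  moreover have "mpev q M = 0"
    unfolding q_def by (simp add: mpev_diff mpev_sum mpev_monom c)
  ultimately show ?thesis by blast
qed

lemma mpev_lin: "mpev [:-z, 1:] A = A - z *\<^sub>R mat 1"
  by (simp add: mpev_pCons mpev_const)

lemma good_annihilator:
  fixes M :: "real^'n^'n"
  assumes inv: "\<And>z::real. z \<le> 0 \<Longrightarrow> invertible (M - z *\<^sub>R mat 1)"
  shows "\<exists>q. q \<noteq> 0 \<and> mpev q M = 0 \<and> (\<forall>z. poly q z = 0 \<longrightarrow> z > 0)"
proof -
  have "q \<noteq> 0 \<Longrightarrow> mpev q M = 0 \<Longrightarrow> ?thesis" for q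
  proof (induction "degree q" arbitrary: q rule: less_induct)
    case less
    show ?case
    proof (cases "\<forall>z. poly q z = 0 \<longrightarrow> z > 0")
      case True then show ?thesis using less.prems by blast
    next
      case False
      then obtain z where z: "poly q z = 0" "z \<le> 0" by force
      then obtain r where r: "q = [:-z, 1:] * r" using poly_eq_0_iff_dvd by blast
      have "r \<noteq> 0" using less.prems r by auto
      have "degree q = degree [:-z, 1:] + degree r" unfolding r
        by (rule degree_mult_eq) (use \<open>r \<noteq> 0\<close> in auto)
      then have dq: "degree q = Suc (degree r)" by simp
      have "(M - z *\<^sub>R mat 1) ** mpev r M = 0"
        using less.prems(2) unfolding r mpev_mult mpev_lin .
      then have "matrix_inv (M - z *\<^sub>R mat 1) ** ((M - z *\<^sub>R mat 1) ** mpev r M) = 0" by simp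
      then have "mpev r M = 0" using minv(2)[OF inv[OF z(2)]] by (simp add: matrix_mul_assoc)
      then show ?thesis using less.hyps[of r] dq \<open>r \<noteq> 0\<close> by simp
    qed
  qed
  then show ?thesis using annihilator[of M] by blast
qed




abbreviation rp :: "real poly \<Rightarrow> complex poly" where "rp \<equiv> map_poly of_real"

lemma coeff_rp: "coeff (rp p) n = of_real (coeff p n)" by (simp add: coeff_map_poly)
lemma rp_add: "rp (p + q) = rp p + rp q" by (rule poly_eqI) (simp add: coeff_rp)
lemma rp_diff: "rp (p - q) = rp p - rp q" by (rule poly_eqI) (simp add: coeff_rp)
lemma rp_mult: "rp (p * q) = rp p * rp q" by (rule poly_eqI) (simp add: coeff_rp coeff_mult)
lemma rp_one: "rp 1 = 1" by (rule poly_eqI) (simp add: coeff_rp coeff_1)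
lemma rp_power: "rp (p ^ k) = rp p ^ k" by (induction k) (simp_all add: rp_mult rp_one)
lemma rp_x: "rp [:0,1:] = [:0,1:]" by (simp add: map_poly_pCons)
lemma poly_rp_real: "poly (rp p) (of_real x) = of_real (poly p x)"
  by (induction p) (auto simp: map_poly_pCons)
lemma degree_rp: "degree (rp p) = degree p" by (rule degree_map_poly) simp
lemma cnj_rp: "map_poly cnj (rp p) = rp p" by (rule poly_eqI) (simp add: coeff_map_poly)
lemma rp_eq_0: "rp p = 0 \<Longrightarrow> p = 0"
  by (metis coeff_rp of_real_eq_0_iff poly_eqI coeff_0)

lemma Re_of_real_mult: "Re (of_real r * z) = r * Re z" by simp

lemma rp_dvd: assumes "rp a dvd rp b" shows "a dvd b"
proof -
  obtain c where c: "rp b = rp a * c" using assms by (auto elim: dvdE)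
  have "b = a * map_poly Re c"
  proof (rule poly_eqI)
    fix n
    have "coeff b n = Re (coeff (rp b) n)" by (simp add: coeff_rp)
    also have "\<dots> = Re (\<Sum>i\<le>n. of_real (coeff a i) * coeff c (n - i))"
      by (simp add: c coeff_mult coeff_rp)
    also have "\<dots> = (\<Sum>i\<le>n. coeff a i * Re (coeff c (n - i)))"
      by (simp add: Re_sum)
    also have "\<dots> = coeff (a * map_poly Re c) n" by (simp add: coeff_mult coeff_map_poly)
    finally show "coeff b n = coeff (a * map_poly Re c) n" .
  qed
  thus ?thesis by simp
qed

lemma interp: "finite Z \<Longrightarrow> \<exists>s::complex poly. \<forall>z\<in>Z. poly s z = v z"
proof (induction Z rule: finite_induct)
  case empty show ?case by auto
next
  case (insert a Z)
  obtain s where s: "\<forall>z\<in>Z. poly s z = v z" using insert by blast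
  define w where "w = (\<Prod>z\<in>Z. [:-z,1:])"
  have w0: "poly w z = 0" if "z\<in>Z" for z using insert(1) that by (auto simp: w_def poly_prod)
  have wa: "poly w a \<noteq> 0" using insert by (auto simp: w_def poly_prod)
  define s' where "s' = s + smult ((v a - poly s a) / poly w a) w"
  have "\<forall>z\<in>insert a Z. poly s' z = v z" using wa by (auto simp: s'_def w0 s)
  then show ?case by blast
qed

lemma sqrt_poly:
  fixes q :: "real poly"
  assumes "q \<noteq> 0" "\<forall>z. poly q z = 0 \<longrightarrow> z > 0"
  shows "\<exists>p. q dvd ([:0,1:] - p^2) ^ degree q"
proof -
  let ?Q = "rp q"
  define Z where "Z = {z. poly ?Q z = 0}"
  have Q0: "?Q \<noteq> 0" using assms(1) rp_eq_0 by blast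
  have finZ: "finite Z" using poly_roots_finite[OF Q0] Z_def by simp
  have Znp: "z \<notin> \<real>\<^sub>\<le>\<^sub>0" if "z \<in> Z" for z
  proof
    assume "z \<in> \<real>\<^sub>\<le>\<^sub>0"
    then have e: "z = of_real (Re z)" and le: "Re z \<le> 0" by (auto simp: complex_nonpos_Reals_iff complex_eq_iff)
    have "of_real (poly q (Re z)) = (0::complex)" using that e Z_def poly_rp_real[of q "Re z"] by simp
    then have "poly q (Re z) = 0" by simp
    with assms(2) le show False by force
  qed
  have Zc: "cnj z \<in> Z" if "z \<in> Z" for z
    using that unfolding Z_def using poly_cnj[of ?Q z] cnj_rp[of q] by simp
  obtain s where s: "\<forall>z\<in>Z. poly s z = csqrt z" using interp[OF finZ] by blast
  define p where "p = map_poly Re s"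
  have rpp: "rp p = smult (1/2) (s + map_poly cnj s)"
    by (rule poly_eqI) (simp add: p_def coeff_map_poly complex_eq_iff)
  have pz: "poly (rp p) z = csqrt z" if "z \<in> Z" for z
  proof -
    have "poly (rp p) z = (poly s z + cnj (poly s (cnj z))) / 2" by (simp add: rpp)
    also have "\<dots> = (csqrt z + cnj (csqrt (cnj z))) / 2" using s that Zc by simp
    also have "cnj (csqrt (cnj z)) = csqrt z" using cnj_csqrt[OF Znp[OF that]] by (metis complex_cnj_cnj)
    finally show ?thesis by simp
  qed
  let ?P = "[:0,1:] - p^2"
  have "\<forall>z. poly ?Q z = 0 \<longrightarrow> poly (rp ?P) z = 0"
    using pz by (simp add: Z_def rp_diff rp_power rp_x power2_csqrt)
  then have "?Q dvd (rp ?P) ^ degree ?Q" using nullstellensatz_univariate Q0 by blast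
  then have "rp q dvd rp (?P ^ degree q)" by (simp add: rp_power degree_rp)
  then show ?thesis using rp_dvd by blast
qed

lemma one_gchoose: "(1::real) gchoose i = coeff [:1,1:] i"
proof -
  have "(1::real) gchoose i = of_nat (1 choose i)" using binomial_gbinomial[of 1 i, where 'a=real] by simp
  then show ?thesis by (cases i; cases "i - 1") (auto simp: coeff_pCons)
qed

lemma sqrt1x: "\<exists>d. (\<Sum>j<k. monom ((1/2::real) gchoose j) j) ^ 2 = [:1,1:] + monom 1 k * d"
proof -
  define c where "c = (\<lambda>j. (1/2::real) gchoose j)"
  define b where "b = (\<Sum>j<k. monom (c j) j)"
  have cb: "coeff b a = (if a < k then c a else 0)" for a
    by (simp add: b_def coeff_sum coeff_monom)
  have "monom 1 k dvd b^2 - [:1,1:]"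
  proof (subst monom_1_dvd_iff', intro allI impI)
    fix i assume "i < k"
    have "coeff (b^2) i = (\<Sum>a\<le>i. c a * c (i - a))"
      unfolding power2_eq_square coeff_mult using \<open>i < k\<close> by (intro sum.cong) (auto simp: cb)
    also have "\<dots> = (1/2 + 1/2) gchoose i"
      using gbinomial_Vandermonde[of "1/2::real" "1/2" i] by (simp add: c_def atMost_atLeast0)
    also have "\<dots> = coeff [:1,1:] i" using one_gchoose by simp
    finally show "coeff (b\<^sup>2 - [:1, 1:]) i = 0" by simp
  qed
  then obtain d where "b^2 - [:1,1:] = monom 1 k * d" by (auto elim: dvdE)
  then show ?thesis unfolding b_def c_def by (metis add.commute diff_eq_eq)
qed




lemma matrix_sqrt:
  fixes M g :: "real^'n^'n"
  assumes invM: "invertible M" and eig: "\<And>z::real. z \<le> 0 \<Longrightarrow> invertible (M - z *\<^sub>R mat 1)"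
    and gM: "good g M M"
  shows "\<exists>R. good g M R \<and> R ** R = M"
proof -
  obtain q where q: "q \<noteq> 0" "mpev q M = 0" "\<forall>z. poly q z = 0 \<longrightarrow> z > 0"
    using good_annihilator[OF eig] by blast
  obtain p where "q dvd ([:0,1:] - p^2) ^ degree q" using sqrt_poly q(1,3) by blast
  then obtain d where d: "([:0,1:] - p^2) ^ degree q = q * d" by (auto elim: dvdE)
  define k where "k = degree q"
  define S where "S = mpev p M"
  define N where "N = mpev ([:0,1:] - p^2) M"
  have NS: "N = M - S ** S" by (simp add: N_def S_def mpev_diff mpev_x mpev_power numeral_2_eq_2 mpev_mult)
  have "mpow N k = mpev (([:0,1:] - p^2) ^ degree q) M" by (simp add: N_def k_def mpev_power)
  also have "\<dots> = 0" using d q(2) by (simp add: mpev_mult)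
  finally have Nk: "mpow N k = 0" .
  have gS: "good g M S" unfolding S_def by (rule good_mpev[OF gM])
  have gN: "good g M N" unfolding N_def by (rule good_mpev[OF gM])
  define Mi where "Mi = matrix_inv M"
  have gMi: "good g M Mi" using good_inv[OF gM invM] Mi_def by simp
  have MMi: "M ** Mi = mat 1" "Mi ** M = mat 1" using minv[OF invM] Mi_def by auto
  define T where "T = Mi ** N"
  have gT: "good g M T" using good_mult gMi gN T_def by blast
  have Tk: "mpow T k = 0" unfolding T_def using mpow_mult_comm[OF good_comm[OF gMi gN], of k] Nk by simp
  have geo: "(mat 1 - T) ** (\<Sum>j<m. mpow T j) = mat 1 - mpow T m" for m
  proof (induction m)
    case (Suc m)
    have "(mat 1 - T) ** (\<Sum>j<Suc m. mpow T j) = (mat 1 - T) ** (\<Sum>j<m. mpow T j) + (mat 1 - T) ** mpow T m"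
      by (simp add: matrix_add_ldistrib)
    also have "\<dots> = (mat 1 - mpow T m) + (mpow T m - T ** mpow T m)"
      by (subst Suc) (simp add: mm_diff_right)
    finally show ?case by simp
  qed simp
  define W where "W = (\<Sum>j<k. mpow T j) ** Mi"
  have gW: "good g M W" unfolding W_def
    by (intro good_mult good_sum good_mpow gT gMi)
  have SSW: "S ** S ** W = mat 1"
  proof -
    have "M ** (mat 1 - T) = M - M ** Mi ** N" by (simp add: T_def mm_diff_left matrix_mul_assoc)
    then have SS: "S ** S = M ** (mat 1 - T)" by (simp add: MMi NS)
    have "S ** S ** W = M ** ((mat 1 - T) ** (\<Sum>j<k. mpow T j)) ** Mi"
      by (simp add: SS W_def matrix_mul_assoc)
    also have "\<dots> = M ** Mi" by (simp add: geo Tk)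
    finally show ?thesis using MMi by simp
  qed
  define K where "K = W ** N"
  have gK: "good g M K" using good_mult gW gN K_def by blast
  have Kk: "mpow K k = 0" unfolding K_def using mpow_mult_comm[OF good_comm[OF gW gN], of k] Nk by simp
  define b where "b = (\<Sum>j<k. monom ((1/2::real) gchoose j) j)"
  obtain e where e: "b^2 = [:1,1:] + monom 1 k * e" using sqrt1x unfolding b_def by blast
  define B where "B = mpev b K"
  have gB: "good g M B" unfolding B_def by (rule good_mpev[OF gK])
  have BB: "B ** B = mat 1 + K"
  proof -
    have "B ** B = mpev (b^2) K" by (simp add: B_def power2_eq_square mpev_mult)
    also have "\<dots> = mat 1 + K" using e by (simp add: mpev_add mpev_mult mpev_monom Kk mpev_pCons)
    finally show ?thesis .
  qed
  define R where "R = S ** B"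
  have gR: "good g M R" unfolding R_def by (rule good_mult[OF gS gB])
  have BS: "B ** S = S ** B" using good_comm gB gS by blast
  have "R ** R = S ** (B ** S) ** B" by (simp add: R_def matrix_mul_assoc)
  also have "\<dots> = S ** S ** (B ** B)" by (simp add: BS matrix_mul_assoc)
  also have "\<dots> = S ** S + S ** S ** W ** N" by (simp add: BB matrix_add_ldistrib K_def matrix_mul_assoc)
  also have "\<dots> = M" using SSW NS by simp
  finally show ?thesis using gR by blast
qed




lemma H_sq: "minkowski t0 ** minkowski t0 = mat 1"
proof -
  have "(\<Sum>k\<in>UNIV. minkowski t0 $ i $ k * minkowski t0 $ k $ j) = mat 1 $ i $ j" for i j
  proof -
    have "(\<Sum>k\<in>UNIV. minkowski t0 $ i $ k * minkowski t0 $ k $ j) = (\<Sum>k\<in>UNIV. if k = i then minkowski t0 $ i $ i * minkowski t0 $ i $ j else 0)"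
      by (rule sum.cong) (auto simp: minkowski_def)
    also have "\<dots> = mat 1 $ i $ j" by (simp add: minkowski_def mat_def)
    finally show ?thesis .
  qed
  then show ?thesis by (simp add: vec_eq_iff matrix_matrix_mult_def)
qed

lemma H_sym: "transpose (minkowski t0) = minkowski t0"
  by (simp add: vec_eq_iff transpose_def minkowski_def)

lemma quad_form: "(\<Sum>A\<in>UNIV. \<Sum>B\<in>UNIV. H $ A $ B * E $ A $ \<mu> * E $ B $ \<nu>) = (transpose E ** H ** E) $ \<mu> $ \<nu>"
  for H E :: "real^'n^'n"
proof -
  have "(transpose E ** H ** E) $ \<mu> $ \<nu> = (\<Sum>B\<in>UNIV. (\<Sum>A\<in>UNIV. E $ A $ \<mu> * H $ A $ B) * E $ B $ \<nu>)"
    by (simp add: matrix_matrix_mult_def transpose_def)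
  also have "\<dots> = (\<Sum>B\<in>UNIV. \<Sum>A\<in>UNIV. H $ A $ B * E $ A $ \<mu> * E $ B $ \<nu>)"
    by (simp add: sum_distrib_right sum_distrib_left mult_ac)
  also have "\<dots> = (\<Sum>A\<in>UNIV. \<Sum>B\<in>UNIV. H $ A $ B * E $ A $ \<mu> * E $ B $ \<nu>)"
    by (rule sum.swap)
  finally show ?thesis by simp
qed

lemma third_form: "(\<Sum>\<mu>\<in>UNIV. e $ A $ \<mu> * (\<Sum>C\<in>UNIV. H $ B $ C * L $ C $ \<mu>)) = (e ** transpose (H ** L)) $ A $ B"
  for H e L :: "real^'n^'n"
  by (simp add: matrix_matrix_mult_def transpose_def)

lemma scale_mat_vec: "((z::real) *\<^sub>R mat 1) *v x = z *\<^sub>R (x::real^'n)"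
proof -
  have "(\<Sum>j\<in>UNIV. (z *\<^sub>R mat 1 :: real^'n^'n) $ i $ j * x $ j) = (\<Sum>j\<in>UNIV. if j = i then z * x $ i else 0)" for i
    by (rule sum.cong) (auto simp: mat_def)
  then show ?thesis by (simp add: vec_eq_iff matrix_vector_mult_def)
qed


theorem proposition5:
  fixes t0 :: "'n::finite" and g f :: "real^'n^'n"
  assumes "CARD('n) \<ge> 2"
    and "lorentzian t0 g" and "lorentzian t0 f"
    and "\<forall>l. real_eigenvalue (matrix_inv g ** f) l \<longrightarrow> \<not> l < 0"
  shows "\<exists>e L :: real^'n^'n.
           (\<forall>\<mu> \<nu>. (\<Sum>A\<in>UNIV. \<Sum>B\<in>UNIV. minkowski t0 $ A $ B * e $ A $ \<mu> * e $ B $ \<nu>)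
                    = matrix_inv g $ \<mu> $ \<nu>) \<and>
           (\<forall>\<mu> \<nu>. (\<Sum>A\<in>UNIV. \<Sum>B\<in>UNIV. minkowski t0 $ A $ B * L $ A $ \<mu> * L $ B $ \<nu>)
                    = f $ \<mu> $ \<nu>) \<and>
           (\<forall>A B. (\<Sum>\<mu>\<in>UNIV. e $ A $ \<mu> * (\<Sum>C\<in>UNIV. minkowski t0 $ B $ C * L $ C $ \<mu>))
                 = (\<Sum>\<mu>\<in>UNIV. e $ B $ \<mu> * (\<Sum>C\<in>UNIV. minkowski t0 $ A $ C * L $ C $ \<mu>)))"
proof -
  define H where "H = minkowski t0"
  from assms(2) have gsym: "transpose g = g" and ginv: "invertible g" unfolding lorentzian_def by auto
  from assms(3) obtain P where fsym: "transpose f = f" and finv: "invertible f"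
    and Pinv: "invertible P" and PfP: "transpose P ** f ** P = H"
    unfolding lorentzian_def H_def by auto
  define Gi where "Gi = matrix_inv g"
  define M where "M = Gi ** f"
  have gGi: "g ** Gi = mat 1" "Gi ** g = mat 1" using minv[OF ginv] Gi_def by auto
  have tGi: "transpose Gi = Gi" using transpose_minv[OF ginv] gsym Gi_def by simp
  have invM: "invertible M" unfolding M_def Gi_def by (rule invertible_mult[OF minv_invertible[OF ginv] finv])
  have gMf: "g ** M = f" by (simp add: M_def matrix_mul_assoc gGi)
  have gM: "good g M M"
  proof -
    have "transpose M ** g = f ** (Gi ** g)"
      by (simp add: M_def matrix_transpose_mul fsym tGi matrix_mul_assoc)
    then have "transpose M ** g = g ** M" by (simp add: gGi gMf)
    then show ?thesis unfolding good_def by auto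
  qed
  define Mi where "Mi = matrix_inv M"
  have MMi: "M ** Mi = mat 1" "Mi ** M = mat 1" using minv[OF invM] Mi_def by auto
  have eig: "invertible (M - z *\<^sub>R mat 1)" if "z \<le> 0" for z
  proof (rule ccontr)
    assume "\<not> invertible (M - z *\<^sub>R mat 1)"
    then have "\<not> (\<forall>x. (M - z *\<^sub>R mat 1) *v x = 0 \<longrightarrow> x = 0)"
      using invertible_left_inverse matrix_left_invertible_ker by blast
    then obtain x where x: "(M - z *\<^sub>R mat 1) *v x = 0" "x \<noteq> 0" by blast
    then have Mx: "M *v x = z *\<^sub>R x" by (simp add: matrix_vector_mult_diff_rdistrib scale_mat_vec)
    show False
    proof (cases "z < 0")
      case True
      then have "real_eigenvalue (matrix_inv g ** f) z"
        unfolding real_eigenvalue_def using Mx x(2) M_def Gi_def by blast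
      then show False using assms(4) True by blast
    next
      case False
      then have "M *v x = 0" using Mx \<open>z \<le> 0\<close> by simp
      then have "Mi *v (M *v x) = 0" by simp
      then have "x = 0" by (simp add: matrix_vector_mul_assoc MMi)
      then show False using x(2) by simp
    qed
  qed
  obtain R where gR: "good g M R" and RR: "R ** R = M" using matrix_sqrt[OF invM eig gM] by blast
  have tRg: "transpose R ** g = g ** R" using gR unfolding good_def by blast
  have gMi: "good g M Mi" using good_inv[OF gM invM] Mi_def by simp
  have RMi: "R ** Mi = Mi ** R" using good_comm[OF gR gMi] .
  have RM: "R ** M = M ** R" using good_commM[OF gR] .
  define Pi where "Pi = matrix_inv P"
  have PPi: "P ** Pi = mat 1" "Pi ** P = mat 1" using minv[OF Pinv] Pi_def by auto
  have tPPi: "transpose Pi ** transpose P = mat 1"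
    by (metis PPi(1) matrix_transpose_mul transpose_mat)
  have f_eq: "f = transpose Pi ** H ** Pi"
  proof -
    have "transpose Pi ** H ** Pi = (transpose Pi ** transpose P) ** f ** (P ** Pi)"
      by (simp add: PfP[symmetric] matrix_mul_assoc)
    then show ?thesis by (simp add: tPPi PPi)
  qed
  have HH: "H ** H = mat 1" unfolding H_def by (rule H_sq)
  have tH: "transpose H = H" unfolding H_def by (rule H_sym)
  have fP: "f ** P = transpose Pi ** H" by (simp add: f_eq matrix_mul_assoc[symmetric] PPi)
  have finv_eq: "matrix_inv f = P ** H ** transpose P"
  proof (rule minv_unique)
    have "f ** (P ** H ** transpose P) = transpose Pi ** (H ** H) ** transpose P"
      by (simp add: fP matrix_mul_assoc)
    also have "\<dots> = mat 1" using HH by (simp add: tPPi)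
    finally show "f ** (P ** H ** transpose P) = mat 1" .
  qed
  have fig: "matrix_inv f ** g = Mi"
  proof -
    have "M ** (matrix_inv f ** g) = Gi ** (f ** matrix_inv f) ** g"
      by (simp add: M_def matrix_mul_assoc)
    also have "\<dots> = mat 1" using minv(1)[OF finv] gGi by simp
    finally show ?thesis using minv_unique Mi_def by metis
  qed
  have tR: "transpose R = g ** R ** Gi"
  proof -
    have "transpose R = transpose R ** g ** Gi" by (simp add: gGi matrix_mul_assoc[symmetric])
    then show ?thesis by (simp add: tRg)
  qed
  define E where "E = transpose (R ** P)"
  define L where "L = Pi"
  have c1: "transpose E ** H ** E = Gi"
  proof -
    have "transpose E ** H ** E = R ** (P ** H ** transpose P) ** transpose R"
      by (simp add: E_def matrix_transpose_mul matrix_mul_assoc)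
    also have "\<dots> = R ** (matrix_inv f ** g) ** R ** Gi" by (simp add: finv_eq tR matrix_mul_assoc)
    also have "\<dots> = Mi ** (R ** R) ** Gi" by (simp add: fig RMi matrix_mul_assoc)
    also have "\<dots> = Gi" by (simp add: RR MMi)
    finally show ?thesis .
  qed
  have c2: "transpose L ** H ** L = f" by (simp add: L_def f_eq)
  define Y where "Y = H ** Pi ** R ** P"
  have Yeq: "Y = transpose P ** f ** R ** P"
    by (simp add: Y_def PfP[symmetric] matrix_mul_assoc[symmetric] PPi)
  have Rf: "transpose R ** f = f ** R"
  proof -
    have "transpose R ** f = transpose R ** g ** M" by (simp add: gMf flip: matrix_mul_assoc)
    also have "\<dots> = g ** M ** R" by (metis tRg RM matrix_mul_assoc)
    finally show ?thesis by (simp add: gMf)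
  qed
  have tY: "transpose Y = Y"
  proof -
    have "transpose Y = transpose P ** (transpose R ** f) ** P"
      by (simp add: Yeq matrix_transpose_mul fsym matrix_mul_assoc)
    then show ?thesis by (simp add: Rf Yeq matrix_mul_assoc)
  qed
  have XY: "E ** transpose (H ** L) = transpose Y"
    by (simp add: E_def L_def Y_def matrix_transpose_mul matrix_mul_assoc)
  have r1: "\<forall>\<mu> \<nu>. (\<Sum>A\<in>UNIV. \<Sum>B\<in>UNIV. H $ A $ B * E $ A $ \<mu> * E $ B $ \<nu>) = Gi $ \<mu> $ \<nu>"
    by (simp add: quad_form c1)
  have r2: "\<forall>\<mu> \<nu>. (\<Sum>A\<in>UNIV. \<Sum>B\<in>UNIV. H $ A $ B * L $ A $ \<mu> * L $ B $ \<nu>) = f $ \<mu> $ \<nu>"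
    by (simp add: quad_form c2)
  have r3: "\<forall>A B. (\<Sum>\<mu>\<in>UNIV. E $ A $ \<mu> * (\<Sum>C\<in>UNIV. H $ B $ C * L $ C $ \<mu>))
         = (\<Sum>\<mu>\<in>UNIV. E $ B $ \<mu> * (\<Sum>C\<in>UNIV. H $ A $ C * L $ C $ \<mu>))"
  proof (intro allI)
    fix A B
    have t1: "transpose Y $ A $ B = Y $ B $ A" "transpose Y $ B $ A = Y $ A $ B"
      by (simp_all add: transpose_def)
    have YY: "Y $ A $ B = Y $ B $ A" using t1 tY by simp
    show "(\<Sum>\<mu>\<in>UNIV. E $ A $ \<mu> * (\<Sum>C\<in>UNIV. H $ B $ C * L $ C $ \<mu>))
         = (\<Sum>\<mu>\<in>UNIV. E $ B $ \<mu> * (\<Sum>C\<in>UNIV. H $ A $ C * L $ C $ \<mu>))"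
      unfolding third_form XY tY by (rule YY)
  qed
  show ?thesis
    apply (rule exI[of _ E], rule exI[of _ L])
    using r1 r2 r3 unfolding H_def Gi_def by (intro conjI)
qed


end
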